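(* Let $mG$ be a finite $|N|$-player canonical misinformation game on $|S|$ strategies. Then the Stable Set $\mathcal{AD}^\infty(\{mG\})$ is finite.
   Context: A normal-form game is $G=\langle N,S,P\rangle$ with finite players $N$, finite pure strategy sets $S_i$, positions $S=\times_i S_i$, payoffs $P_i:S\to\mathbb{R}$. A misinformation game $mG=\langle G^0,G^1,\dots,G^{|N|}\rangle$ consists of the actual game $G^0$ and subjective games $G^i$; it is canonical if all $G^i=\langle N,S,P^i\rangle$ differ from $G^0$ only in payoffs and in every $G^i$ all players have equally many pure strategies. $NME(mG)$ is the set of profiles $\sigma=(\sigma_1,\dots,\sigma_{|N|})$ such that each $\sigma_i$ is player $i$'s component of some Nash equilibrium of $G^i$. $\chi(\sigma)=\mathrm{supp}(\sigma_1)\times\dots\times\mathrm{supp}(\sigma_{|N|})$. For $\vec v\in S$, $mG_{\vec v}$ is obtained by replacing, in every $P^i$ ($i\ge1$), the payoff vector at position $\vec v$ by $P^0(\vec v)$. For a set $M$ of misinformation games, $\mathcal{AD}(M)=\{mG_{\vec u}: mG\in M,\sigma\in NME(mG),\vec u\in\chi(\sigma)\}$, $\mathcal{AD}^{(0)}(M)=M$, $\mathcal{AD}^{(t+1)}(M)=\mathcal{AD}^{(t)}(\mathcal{AD}(M))$. The length $\mathfrak{L}$ is the least $t\ge0$ with $\mathcal{AD}^{(t+1)}(M)=\mathcal{AD}^{(t)}(M)$, and the Stable Set is $\mathcal{AD}^\infty(M)=\mathcal{AD}^{(\mathfrak{L})}(M)$. *)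

theory Defs
  imports Complex_Main
begin

text \<open>Players form a finite type 'p, and (since in a
canonical game all players have equally many pure strategies and all subjective games
share N and S) every player's pure strategy set is the finite type 's. A position is a
pure profile 'p \<Rightarrow> 's.\<close>

type_synonym ('p, 's) payoff = "'p \<Rightarrow> ('p \<Rightarrow> 's) \<Rightarrow> real"

text \<open>A canonical misinformation game: the actual payoffs P^0 and, for each player i,
the payoffs P^i of the subjective game G^i.\<close>
type_synonym ('p, 's) mgame = "('p, 's) payoff \<times> ('p \<Rightarrow> ('p, 's) payoff)"

definition mixed_strategy :: "('s::finite \<Rightarrow> real) \<Rightarrow> bool" where
  "mixed_strategy x \<longleftrightarrow> (\<forall>s. x s \<ge> 0) \<and> (\<Sum>s\<in>UNIV. x s) = 1"

definition mixed_profile :: "('p \<Rightarrow> 's::finite \<Rightarrow> real) \<Rightarrow> bool" where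
  "mixed_profile \<sigma> \<longleftrightarrow> (\<forall>i. mixed_strategy (\<sigma> i))"

definition exp_payoff ::
  "('p::finite, 's::finite) payoff \<Rightarrow> 'p \<Rightarrow> ('p \<Rightarrow> 's \<Rightarrow> real) \<Rightarrow> real" where
  "exp_payoff P j \<sigma> = (\<Sum>v\<in>UNIV. (\<Prod>i\<in>UNIV. \<sigma> i (v i)) * P j v)"

definition nash_eq :: "('p::finite, 's::finite) payoff \<Rightarrow> ('p \<Rightarrow> 's \<Rightarrow> real) \<Rightarrow> bool" where
  "nash_eq P \<sigma> \<longleftrightarrow> mixed_profile \<sigma> \<and>
     (\<forall>j \<tau>. mixed_strategy \<tau> \<longrightarrow> exp_payoff P j (\<sigma>(j := \<tau>)) \<le> exp_payoff P j \<sigma>)"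

definition NME :: "('p::finite, 's::finite) mgame \<Rightarrow> ('p \<Rightarrow> 's \<Rightarrow> real) set" where
  "NME mG = {\<sigma>. \<forall>i. \<exists>\<sigma>'. nash_eq (snd mG i) \<sigma>' \<and> \<sigma>' i = \<sigma> i}"

definition supp :: "('s \<Rightarrow> real) \<Rightarrow> 's set" where
  "supp x = {s. x s \<noteq> 0}"

definition chi :: "('p \<Rightarrow> 's \<Rightarrow> real) \<Rightarrow> ('p \<Rightarrow> 's) set" where
  "chi \<sigma> = {v. \<forall>i. v i \<in> supp (\<sigma> i)}"

definition upd_game :: "('p, 's) mgame \<Rightarrow> ('p \<Rightarrow> 's) \<Rightarrow> ('p, 's) mgame" where
  "upd_game mG v = (fst mG, \<lambda>i j u. if u = v then fst mG j v else snd mG i j u)"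

definition AD :: "('p::finite, 's::finite) mgame set \<Rightarrow> ('p, 's) mgame set" where
  "AD M = {upd_game mG u | mG \<sigma> u. mG \<in> M \<and> \<sigma> \<in> NME mG \<and> u \<in> chi \<sigma>}"

definition AD_iter :: "nat \<Rightarrow> ('p::finite, 's::finite) mgame set \<Rightarrow> ('p, 's) mgame set" where
  "AD_iter t = AD ^^ t"

definition AD_length :: "('p::finite, 's::finite) mgame set \<Rightarrow> nat" where
  "AD_length M = (LEAST t. AD_iter (Suc t) M = AD_iter t M)"

definition stable_set :: "('p::finite, 's::finite) mgame set \<Rightarrow> ('p, 's) mgame set" where
  "stable_set M = AD_iter (AD_length M) M"

end

theory Submission
  imports Defs
begin

lemma AD_mono: "X \<subseteq> Y \<Longrightarrow> AD X \<subseteq> AD Y"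
  unfolding AD_def by blast

lemma upd_in_AD: "g \<in> X \<Longrightarrow> \<sigma> \<in> NME g \<Longrightarrow> u \<in> chi \<sigma> \<Longrightarrow> upd_game g u \<in> AD X"
  unfolding AD_def by blast

lemma AD_elim: "h \<in> AD X \<Longrightarrow> \<exists>g \<sigma> u. g \<in> X \<and> \<sigma> \<in> NME g \<and> u \<in> chi \<sigma> \<and> h = upd_game g u"
  unfolding AD_def by blast

definition Agr :: "('p, 's) mgame \<Rightarrow> ('p \<Rightarrow> 's) set" where
  "Agr g = {v. \<forall>i j. snd g i j v = fst g j v}"

lemma upd_same: "u \<in> Agr g \<Longrightarrow> upd_game g u = g"
  unfolding Agr_def upd_game_def by (cases g) (auto intro!: ext)

lemma Agr_upd: "Agr (upd_game g u) = insert u (Agr g)"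
  unfolding Agr_def upd_game_def by auto

lemma iter_Suc: "AD_iter (Suc t) M = AD (AD_iter t M)"
  unfolding AD_iter_def by simp

lemma invariant:
  fixes mG :: "('p::finite, 's::finite) mgame"
  shows "h \<in> AD_iter t {mG} \<Longrightarrow> h \<in> AD_iter (Suc t) {mG} \<or> t \<le> card (Agr h)"
proof (induction t arbitrary: h)
  case 0 then show ?case by simp
next
  case (Suc t)
  from Suc.prems obtain g \<sigma> u where g: "g \<in> AD_iter t {mG}" "\<sigma> \<in> NME g" "u \<in> chi \<sigma>"
    and h: "h = upd_game g u"
    using AD_elim iter_Suc by metis
  show ?case
  proof (cases "g \<in> AD_iter (Suc t) {mG} \<or> u \<in> Agr g")
    case True
    then have "g \<in> AD_iter (Suc t) {mG}" using h upd_same Suc.prems by metis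
    then have "h \<in> AD (AD_iter (Suc t) {mG})" using upd_in_AD g h by metis
    then show ?thesis using iter_Suc by metis
  next
    case False
    then have "t \<le> card (Agr g)" using Suc.IH g(1) by blast
    moreover have "card (Agr h) = Suc (card (Agr g))"
      using False unfolding h Agr_upd by (simp add: card_insert_if)
    ultimately show ?thesis by simp
  qed
qed

definition Rset :: "('p, 's) mgame \<Rightarrow> ('p, 's) mgame set" where
  "Rset mG = (\<lambda>U. (fst mG, \<lambda>i j v. if v \<in> U then fst mG j v else snd mG i j v)) ` UNIV"

lemma Rset_finite: "finite (Rset (mG :: ('p::finite, 's::finite) mgame))"
  unfolding Rset_def by simp

lemma in_Rset:
  fixes mG :: "('p::finite, 's::finite) mgame"
  shows "h \<in> AD_iter t {mG} \<Longrightarrow> h \<in> Rset mG"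
proof (induction t arbitrary: h)
  case 0 then show ?case
    unfolding AD_iter_def Rset_def
    by (cases mG) (auto intro!: image_eqI[where x="{}"])
next
  case (Suc t)
  from Suc.prems obtain g \<sigma> u where g: "g \<in> AD_iter t {mG}"
    and h: "h = upd_game g u"
    using AD_elim iter_Suc by metis
  from Suc.IH[OF g] obtain U where U: "g = (fst mG, \<lambda>i j v. if v \<in> U then fst mG j v else snd mG i j v)"
    unfolding Rset_def by auto
  have "h = (fst mG, \<lambda>i j v. if v \<in> insert u U then fst mG j v else snd mG i j v)"
    unfolding h U upd_game_def by (auto intro!: ext)
  then show ?case unfolding Rset_def by blast
qed

theorem corollary1:
  fixes mG :: "('p::finite, 's::finite) mgame"
  shows "(\<exists>t. AD_iter (Suc t) {mG} = AD_iter t {mG}) \<and> finite (stable_set {mG})"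
proof -
  define X where "X = (\<lambda>t. AD_iter t {mG})"
  define n where "n = card (UNIV :: ('p \<Rightarrow> 's) set)"
  have mono: "X t \<subseteq> X (Suc t)" if "t > n" for t
  proof
    fix h assume "h \<in> X t"
    moreover have "card (Agr h) \<le> n" unfolding n_def by (rule card_mono) auto
    ultimately show "h \<in> X (Suc t)" using invariant[of h t mG] that unfolding X_def by fastforce
  qed
  have sub: "X t \<subseteq> Rset mG" for t using in_Rset unfolding X_def by blast
  have ex: "\<exists>t. X (Suc t) = X t"
  proof (rule ccontr)
    assume "\<not> ?thesis"
    then have ne: "X (Suc t) \<noteq> X t" for t by blast
    have "k \<le> card (X (Suc n + k))" for k
    proof (induction k)
      case 0 then show ?case by simp
    next
      case (Suc k)
      have "X (Suc n + k) \<subset> X (Suc (Suc n + k))" using mono[of "Suc n + k"] ne[of "Suc n + k"] by auto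
      then have "card (X (Suc n + k)) < card (X (Suc (Suc n + k)))"
        using psubset_card_mono finite_subset[OF sub Rset_finite] by blast
      then show ?case using Suc.IH by simp
    qed
    moreover have "card (X (Suc n + k)) \<le> card (Rset mG)" for k
      using card_mono[OF Rset_finite sub] .
    ultimately have "Suc (card (Rset mG)) \<le> card (Rset mG)" by (meson order_trans)
    then show False by simp
  qed
  show ?thesis
    using ex finite_subset[OF sub Rset_finite] unfolding X_def stable_set_def by blast
qed

end
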